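(* In the SVAR(1) model with regime chain $\{I_n\}$ on $\{1,\dots,r\}$, for $i\in\{1,\dots,r\}$ and $n\ge1$ let $\Phi_n(i)=\mathbb{E}\big[\|A_n\cdots A_1\|\,\big|\,I_0=i\big]$, where $\|\cdot\|$ is a submultiplicative matrix norm. Then $\Phi_n(i)\to0$ as $n\to\infty$ for every $i$ if and only if there exist constants $C<\infty$ and $\gamma\in(0,1)$ such that $\Phi_n(i)\le C\gamma^n$ for all $n\ge1$ and all $i$.
   Context: SVAR(1) model: let $\{I_n\}$ be a Markov chain on the finite set $\mathcal{S}=\{1,\dots,r\}$. Given fixed real $p\times p$ matrices $B_1,\dots,B_r$ and fixed $p\times p$ matrices $\Sigma_1,\dots,\Sigma_r$, set $A_n=\sum_{i=1}^rB_i\mathbf{1}_{\{I_n=i\}}$ and $E_n=\sum_{i=1}^r\Sigma_i\varepsilon_{ni}\mathbf{1}_{\{I_n=i\}}$, where for each $i$ the sequence $(\varepsilon_{ni})_n$ is i.i.d. with mean zero and identity covariance matrix, the sequences $(\varepsilon_{n1})_n,\dots,(\varepsilon_{nr})_n$ are mutually independent, and $\{I_n\}$ is independent of all the $\varepsilon_{ni}$. The model is $X_n=A_nX_{n-1}+E_n$. *)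

theory Defs
  imports "HOL-Analysis.Analysis"
begin

text \<open>Regime chain: time-homogeneous Markov chain on the finite state type 's with
  transition matrix P (P i j = Pr(I_{n+1} = j | I_n = i)).\<close>
definition stochastic_matrix :: "('s::finite \<Rightarrow> 's \<Rightarrow> real) \<Rightarrow> bool" where
  "stochastic_matrix P \<longleftrightarrow> (\<forall>i j. 0 \<le> P i j) \<and> (\<forall>i. (\<Sum>j\<in>UNIV. P i j) = 1)"

definition submult_matrix_norm :: "(real^'p^'p \<Rightarrow> real) \<Rightarrow> bool" where
  "submult_matrix_norm N \<longleftrightarrow>
     (\<forall>A. 0 \<le> N A) \<and> (\<forall>A. N A = 0 \<longleftrightarrow> A = 0) \<and>
     (\<forall>c A. N (c *\<^sub>R A) = \<bar>c\<bar> * N A) \<and>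
     (\<forall>A B. N (A + B) \<le> N A + N B) \<and>
     (\<forall>A B. N (A ** B) \<le> N A * N B)"

text \<open>Probability that the chain started at I_0 = i follows the path
  I_1 = xs!0, ..., I_n = xs!(n-1).\<close>
definition path_prob :: "('s \<Rightarrow> 's \<Rightarrow> real) \<Rightarrow> 's \<Rightarrow> 's list \<Rightarrow> real" where
  "path_prob P i xs = (\<Prod>k<length xs. P ((i # xs) ! k) ((i # xs) ! Suc k))"

text \<open>The random coefficient product A_n \<cdots> A_1 along the path xs = [I_1,...,I_n],
  where A_k = B (I_k).\<close>
definition coef_prod :: "('s \<Rightarrow> real^'p^'p) \<Rightarrow> 's list \<Rightarrow> real^'p^'p" where
  "coef_prod B xs = fold (\<lambda>s M. B s ** M) xs (mat 1)"

text \<open>Phi_n(i) = E[ N(A_n \<cdots> A_1) | I_0 = i ].\<close>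
definition Phi :: "('s::finite \<Rightarrow> 's \<Rightarrow> real) \<Rightarrow> ('s \<Rightarrow> real^'p^'p) \<Rightarrow> (real^'p^'p \<Rightarrow> real)
    \<Rightarrow> nat \<Rightarrow> 's \<Rightarrow> real" where
  "Phi P B N n i = (\<Sum>xs\<in>{xs::'s list. length xs = n}. path_prob P i xs * N (coef_prod B xs))"

end

theory Submission
  imports Defs
begin

lemma fold_cp:
  fixes B :: "'s \<Rightarrow> real^'n^'n" and M :: "real^'n^'n"
  shows "fold (\<lambda>s M. B s ** M) xs M = coef_prod B xs ** M"
proof (induction xs arbitrary: M)
  case Nil
  then show ?case by (simp add: coef_prod_def matrix_mul_lid)
next
  case (Cons x xs)
  have "coef_prod B (x # xs) = coef_prod B xs ** B x"
    using Cons[of "B x ** mat 1"] by (simp add: coef_prod_def matrix_mul_rid)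
  then show ?case using Cons[of "B x ** M"] by (simp add: matrix_mul_assoc)
qed

lemma cp_append: "coef_prod B (xs @ ys) = coef_prod B ys ** coef_prod B xs"
proof -
  have "coef_prod B (xs @ ys) = fold (\<lambda>s M. B s ** M) ys (coef_prod B xs)"
    by (simp add: coef_prod_def)
  also have "\<dots> = coef_prod B ys ** coef_prod B xs" by (rule fold_cp)
  finally show ?thesis .
qed

lemma pp_Nil: "path_prob P i [] = 1"
  by (simp add: path_prob_def)

lemma pp_Cons: "path_prob P i (x # xs) = P i x * path_prob P x xs"
  unfolding path_prob_def length_Cons prod.lessThan_Suc_shift by simp

lemma pp_append: "path_prob P i (xs @ ys) = path_prob P i xs * path_prob P (last (i # xs)) ys"
  by (induction xs arbitrary: i) (auto simp: pp_Nil pp_Cons)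

lemma pp_nonneg: "stochastic_matrix P \<Longrightarrow> 0 \<le> path_prob P i xs"
  unfolding path_prob_def stochastic_matrix_def by (auto intro: prod_nonneg)

lemma fin_len: "finite {xs::('s::finite) list. length xs = n}"
  using finite_lists_length_eq[of "UNIV::'s set" n] by simp

lemma Phi_nonneg:
  assumes "stochastic_matrix P" "submult_matrix_norm N"
  shows "0 \<le> Phi P B N n i"
proof -
  have N0: "0 \<le> N A" for A using assms(2) unfolding submult_matrix_norm_def by blast
  show ?thesis unfolding Phi_def
    by (rule sum_nonneg) (rule mult_nonneg_nonneg[OF pp_nonneg[OF assms(1)] N0])
qed

lemma len_split: "{zs::'a list. length zs = m + n} =
   (\<lambda>(xs,ys). xs @ ys) ` ({xs. length xs = m} \<times> {ys. length ys = n})"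
proof (intro equalityI subsetI)
  fix zs :: "'a list" assume "zs \<in> {zs. length zs = m + n}"
  show "zs \<in> (\<lambda>(xs,ys). xs @ ys) ` ({xs. length xs = m} \<times> {ys. length ys = n})"
  proof (rule image_eqI[of _ _ "(take m zs, drop m zs)"])
    show "zs = (case (take m zs, drop m zs) of (xs, ys) \<Rightarrow> xs @ ys)" by simp
    show "(take m zs, drop m zs) \<in> {xs. length xs = m} \<times> {ys. length ys = n}"
      using \<open>zs \<in> {zs. length zs = m + n}\<close> by simp
  qed
next
  fix zs :: "'a list"
  assume "zs \<in> (\<lambda>(xs,ys). xs @ ys) ` ({xs. length xs = m} \<times> {ys. length ys = n})"
  then obtain p where p: "p \<in> {xs. length xs = m} \<times> {ys. length ys = n}"
    "zs = (\<lambda>(xs,ys). xs @ ys) p" by (rule imageE)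
  obtain xs ys where "p = (xs, ys)" by (cases p)
  with p show "zs \<in> {zs. length zs = m + n}" by simp
qed

lemma Phi_submult:
  assumes sP: "stochastic_matrix P" and sN: "submult_matrix_norm N"
  shows "Phi P B N (m + n) i \<le> Phi P B N m i * (\<Sum>j\<in>UNIV. Phi P B N n j)"
proof -
  let ?S = "\<Sum>j\<in>UNIV. Phi P B N n j"
  have inj: "inj_on (\<lambda>(xs,ys). xs @ ys) ({xs::'a list. length xs = m} \<times> {ys. length ys = n})"
    by (auto simp: inj_on_def)
  have "Phi P B N (m + n) i = (\<Sum>(xs,ys)\<in>{xs. length xs = m} \<times> {ys. length ys = n}.
        path_prob P i (xs @ ys) * N (coef_prod B (xs @ ys)))"
    unfolding Phi_def len_split by (subst sum.reindex[OF inj]) (simp add: case_prod_unfold)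
  also have "\<dots> = (\<Sum>xs\<in>{xs. length xs = m}. \<Sum>ys\<in>{ys. length ys = n}.
        path_prob P i xs * path_prob P (last (i # xs)) ys * N (coef_prod B ys ** coef_prod B xs))"
    by (simp add: sum.cartesian_product pp_append cp_append)
  also have "\<dots> \<le> (\<Sum>xs\<in>{xs. length xs = m}. \<Sum>ys\<in>{ys. length ys = n}.
        path_prob P i xs * N (coef_prod B xs) * (path_prob P (last (i # xs)) ys * N (coef_prod B ys)))"
  proof (intro sum_mono)
    fix xs ys :: "'a list"
    have "N (coef_prod B ys ** coef_prod B xs) \<le> N (coef_prod B ys) * N (coef_prod B xs)"
      using sN by (simp add: submult_matrix_norm_def)
    moreover have "0 \<le> path_prob P i xs * path_prob P (last (i # xs)) ys"
      using pp_nonneg[OF sP] by simp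
    ultimately have "path_prob P i xs * path_prob P (last (i # xs)) ys * N (coef_prod B ys ** coef_prod B xs)
       \<le> path_prob P i xs * path_prob P (last (i # xs)) ys * (N (coef_prod B ys) * N (coef_prod B xs))"
      by (rule mult_left_mono)
    then show "path_prob P i xs * path_prob P (last (i # xs)) ys * N (coef_prod B ys ** coef_prod B xs)
       \<le> path_prob P i xs * N (coef_prod B xs) * (path_prob P (last (i # xs)) ys * N (coef_prod B ys))"
      by (simp add: algebra_simps)
  qed
  also have "\<dots> = (\<Sum>xs\<in>{xs. length xs = m}. path_prob P i xs * N (coef_prod B xs) * Phi P B N n (last (i # xs)))"
    by (simp add: Phi_def sum_distrib_left)
  also have "\<dots> \<le> (\<Sum>xs\<in>{xs. length xs = m}. path_prob P i xs * N (coef_prod B xs) * ?S)"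
  proof (intro sum_mono mult_left_mono)
    fix xs :: "'a list"
    show "Phi P B N n (last (i # xs)) \<le> ?S"
      by (rule member_le_sum) (auto intro: Phi_nonneg[OF sP sN])
    show "0 \<le> path_prob P i xs * N (coef_prod B xs)"
      using pp_nonneg[OF sP] sN by (auto simp: submult_matrix_norm_def)
  qed
  also have "\<dots> = Phi P B N m i * ?S"
    by (simp add: Phi_def sum_distrib_right)
  finally show ?thesis .
qed

theorem proposition2:
  fixes P :: "'s::finite \<Rightarrow> 's \<Rightarrow> real"
    and B :: "'s \<Rightarrow> real^'p^'p"
    and N :: "real^'p^'p \<Rightarrow> real"
  assumes "stochastic_matrix P"
    and "submult_matrix_norm N"
  shows "(\<forall>i. (\<lambda>n. Phi P B N n i) \<longlonglongrightarrow> 0) \<longleftrightarrow>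
         (\<exists>(C::real) (\<gamma>::real). 0 < \<gamma> \<and> \<gamma> < 1 \<and> (\<forall>n\<ge>1. \<forall>i. Phi P B N n i \<le> C * \<gamma> ^ n))"
proof
  assume lim: "\<forall>i. (\<lambda>n. Phi P B N n i) \<longlonglongrightarrow> 0"
  define S where "S n = (\<Sum>j\<in>UNIV. Phi P B N n j)" for n
  have S0: "0 \<le> S n" for n unfolding S_def using Phi_nonneg[OF assms] by (simp add: sum_nonneg)
  have Ssub: "S (m + n) \<le> S m * S n" for m n
    unfolding S_def[of "m+n"] S_def[of m] sum_distrib_right
    by (rule sum_mono) (use Phi_submult[OF assms] in \<open>simp add: S_def\<close>)
  have "S \<longlonglongrightarrow> 0" unfolding S_def using lim by (auto intro!: tendsto_null_sum)
  then have "eventually (\<lambda>n. S n < 1/2) sequentially"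
    by (rule order_tendstoD) simp
  then obtain k0 where k0: "\<And>n. n \<ge> k0 \<Longrightarrow> S n < 1/2" by (auto simp: eventually_sequentially)
  define k where "k = Suc k0"
  have kpos: "k > 0" and Sk: "S k \<le> 1/2" using k0[of k] by (auto simp: k_def)
  define K where "K = (\<Sum>r<k. S r)"
  have K0: "0 \<le> K" unfolding K_def using S0 by (simp add: sum_nonneg)
  have bound: "S (q * k + r) \<le> K * (1/2)^q" if "r < k" for q r
  proof (induction q)
    case 0
    have "S r \<le> K" unfolding K_def by (rule member_le_sum) (use that S0 in auto)
    then show ?case by simp
  next
    case (Suc q)
    have "S (Suc q * k + r) = S (k + (q * k + r))" by (simp add: algebra_simps)
    also have "\<dots> \<le> S k * S (q * k + r)" by (rule Ssub)
    also have "\<dots> \<le> 1/2 * (K * (1/2)^q)"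
      by (rule mult_mono[OF Sk Suc]) (auto simp: S0)
    finally show ?case by simp
  qed
  define \<gamma> where "\<gamma> = root k (1/2)"
  have g0: "0 < \<gamma>" and g1: "\<gamma> < 1" using kpos by (auto simp: \<gamma>_def)
  have gk: "\<gamma> ^ k = 1/2" using kpos by (simp add: \<gamma>_def real_root_pow_pos)
  show "\<exists>(C::real) (\<gamma>::real). 0 < \<gamma> \<and> \<gamma> < 1 \<and> (\<forall>n\<ge>1. \<forall>i. Phi P B N n i \<le> C * \<gamma> ^ n)"
  proof -
  have main: "Phi P B N n i \<le> 2 * K * \<gamma> ^ n" for n i
  proof -
    define q where "q = n div k"
    define r where "r = n mod k"
    have n: "n = q * k + r" by (simp add: q_def r_def)
    have rk: "r < k" using kpos by (simp add: r_def)
    have "Phi P B N n i \<le> S n"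
      unfolding S_def by (rule member_le_sum) (auto intro: Phi_nonneg[OF assms])
    also have "\<dots> \<le> K * (1/2)^q" using bound[OF rk] n by simp
    also have "\<dots> \<le> 2 * K * \<gamma> ^ n"
    proof -
      have "\<gamma> ^ k \<le> \<gamma> ^ r" using rk g0 g1 by (intro power_decreasing) auto
      then have "(1/2::real) \<le> \<gamma> ^ r" using gk by simp
      moreover have "\<gamma> ^ n = (1/2)^q * \<gamma> ^ r"
      proof -
        have "\<gamma> ^ (q * k) = (1/2) ^ q" by (simp add: mult.commute[of q k] power_mult gk)
        then show ?thesis by (simp add: n power_add)
      qed
      ultimately have "(1/2)^q \<le> 2 * \<gamma> ^ n"
      proof -
        assume h1: "(1/2::real) \<le> \<gamma> ^ r" and h2: "\<gamma> ^ n = (1/2)^q * \<gamma> ^ r"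
        have "(1/2::real)^q * (1/2) \<le> (1/2)^q * \<gamma>^r" by (rule mult_left_mono[OF h1]) simp
        then show ?thesis using h2 by linarith
      qed
      then have "K * (1/2)^q \<le> K * (2 * \<gamma> ^ n)" by (rule mult_left_mono[OF _ K0])
      then show ?thesis by (simp add: mult_ac)
    qed
    finally show "Phi P B N n i \<le> 2 * K * \<gamma> ^ n" .
  qed
  show ?thesis using main g0 g1 by blast
  qed
next
  assume "\<exists>(C::real) (\<gamma>::real). 0 < \<gamma> \<and> \<gamma> < 1 \<and> (\<forall>n\<ge>1. \<forall>i. Phi P B N n i \<le> C * \<gamma> ^ n)"
  then obtain C \<gamma> where g: "0 < \<gamma>" "\<gamma> < (1::real)" and b: "\<forall>n\<ge>1. \<forall>i. Phi P B N n i \<le> C * \<gamma> ^ n"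
    by blast
  show "\<forall>i. (\<lambda>n. Phi P B N n i) \<longlonglongrightarrow> 0"
  proof
    fix i
    have t: "(\<lambda>n. C * \<gamma> ^ n) \<longlonglongrightarrow> 0"
      using g by (intro tendsto_mult_right_zero LIMSEQ_power_zero) auto
    show "(\<lambda>n. Phi P B N n i) \<longlonglongrightarrow> 0"
      by (rule tendsto_sandwich[OF _ _ tendsto_const t])
         (use b Phi_nonneg[OF assms] in \<open>auto simp: eventually_sequentially\<close>)
  qed
qed

end
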